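(* Consider an instance of UBM2SP with harmonious order $\mathcal{L}$, and let $\{\pi_1,\pi_2\}$ be a solution in which both manipulators place $p$ in their highest position. Let $c\in\mathcal{C}$ with $\pi_1(c)=x$ and $\pi_2(c)=y$. Suppose there are integers $x',y'$ such that (1) $x'>x$ and $y'>y$; (2) $SC_{\mathcal{V}}(c)+x'+y'-2<SC_{\mathcal{V}}(p)+2|\mathcal{C}|$; (3) $\mathcal{C}_{\pi_1}(x+1,x')\subseteq\mathcal{C}(\mathcal{L},-c)$ and $\mathcal{C}_{\pi_2}(y+1,y')\subseteq\mathcal{C}(\mathcal{L},-c)$. Define $\pi_1'$ by $\pi_1'(c')=\pi_1(c')$ if $\pi_1(c')>x'$ or $\pi_1(c')<x$; $\pi_1'(c)=x'$; and $\pi_1'(c')=j$ if $x<\pi_1(c')=j+1\le x'$. Define $\pi_2'$ analogously: $\pi_2'(c')=\pi_2(c')$ if $\pi_2(c')>y'$ or $\pi_2(c')<y$; $\pi_2'(c)=y'$; and $\pi_2'(c')=j$ if $y<\pi_2(c')=j+1\le y'$. Then $\{\pi_1',\pi_2'\}$ is also a solution.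
   Context: Borda elections: candidates $\mathcal{C}\cup\{p\}$ ($p\notin\mathcal{C}$); each vote is a bijection $\pi:\mathcal{C}\cup\{p\}\to\{1,\dots,|\mathcal{C}|+1\}$, giving candidate $c$ score $\pi(c)-1$; $SC_{\mathcal{V}}(c)$ denotes the total score of $c$ from the non-manipulator votes $\Pi_{\mathcal{V}}$. $p$ wins iff its total score is strictly higher than that of every other candidate. A vote $\pi$ is coincident with a bijection $\mathcal{L}:\mathcal{C}\cup\{p\}\to\{1,\dots,|\mathcal{C}|+1\}$ if for any three distinct candidates $a,b,c$ with $\mathcal{L}(a)<\mathcal{L}(b)<\mathcal{L}(c)$ or $\mathcal{L}(c)<\mathcal{L}(b)<\mathcal{L}(a)$, $\pi(c)>\pi(b)$ implies $\pi(b)>\pi(a)$. UBM2SP: given candidates $\mathcal{C}\cup\{p\}$, votes $\Pi_{\mathcal{V}}$ all coincident with a given bijection $\mathcal{L}$ (harmonious order), with $p$ not the winner, and two manipulators; a solution is a pair of votes $\{\pi_1,\pi_2\}$, both coincident with $\mathcal{L}$, such that $p$ has strictly higher total score than every candidate of $\mathcal{C}$ with respect to $\Pi_{\mathcal{V}}\uplus\{\pi_1,\pi_2\}$. Notation: $\mathcal{C}_L=\{c\in\mathcal{C}:\mathcal{L}(c)<\mathcal{L}(p)\}$, $\mathcal{C}_R=\{c\in\mathcal{C}:\mathcal{L}(c)>\mathcal{L}(p)\}$; for $c\in\mathcal{C}$, $\mathcal{C}(\mathcal{L},-c)=\mathcal{C}_L$ if $c\in\mathcal{C}_R$ and $=\mathcal{C}_R$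 if $c\in\mathcal{C}_L$. For a vote $\pi$ and integers $x\le x'$, $\mathcal{C}_\pi(x,x')=\{c\in\mathcal{C}\cup\{p\}: x\le\pi(c)\le x'\}$. *)

theory Defs
  imports Main
begin

text \<open>A vote is a function 'a => nat that is a bijection from insert p C onto {1..card C + 1};
  candidate c gets score pi c - 1 from it.\<close>

definition is_vote :: "'a set \<Rightarrow> 'a \<Rightarrow> ('a \<Rightarrow> nat) \<Rightarrow> bool" where
  "is_vote C p \<pi> \<longleftrightarrow> bij_betw \<pi> (insert p C) {1..card C + 1}"

definition coincident :: "'a set \<Rightarrow> ('a \<Rightarrow> nat) \<Rightarrow> ('a \<Rightarrow> nat) \<Rightarrow> bool" where
  "coincident D \<pi> L \<longleftrightarrow>
     (\<forall>a\<in>D. \<forall>b\<in>D. \<forall>c\<in>D. a \<noteq> b \<and> b \<noteq> c \<and> a \<noteq> c \<longrightarrow>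
        (L a < L b \<and> L b < L c \<or> L c < L b \<and> L b < L a) \<longrightarrow>
        \<pi> c > \<pi> b \<longrightarrow> \<pi> b > \<pi> a)"

definition vscore :: "('a \<Rightarrow> nat) \<Rightarrow> 'a \<Rightarrow> int" where
  "vscore \<pi> c = int (\<pi> c) - 1"

definition SC :: "('a \<Rightarrow> nat) list \<Rightarrow> 'a \<Rightarrow> int" where
  "SC V c = (\<Sum>\<pi>\<leftarrow>V. vscore \<pi> c)"

definition ubm2sp_instance :: "'a set \<Rightarrow> 'a \<Rightarrow> ('a \<Rightarrow> nat) \<Rightarrow> ('a \<Rightarrow> nat) list \<Rightarrow> bool" where
  "ubm2sp_instance C p L V \<longleftrightarrow>
     finite C \<and> p \<notin> C \<and> is_vote C p L \<and>
     (\<forall>\<pi>\<in>set V. is_vote C p \<pi> \<and> coincident (insert p C) \<pi> L) \<and>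
     \<not> (\<forall>c\<in>C. SC V p > SC V c)"

definition ubm2sp_solution ::
  "'a set \<Rightarrow> 'a \<Rightarrow> ('a \<Rightarrow> nat) \<Rightarrow> ('a \<Rightarrow> nat) list \<Rightarrow> ('a \<Rightarrow> nat) \<Rightarrow> ('a \<Rightarrow> nat) \<Rightarrow> bool" where
  "ubm2sp_solution C p L V \<pi>1 \<pi>2 \<longleftrightarrow>
     is_vote C p \<pi>1 \<and> is_vote C p \<pi>2 \<and>
     coincident (insert p C) \<pi>1 L \<and> coincident (insert p C) \<pi>2 L \<and>
     (\<forall>c\<in>C. SC V p + vscore \<pi>1 p + vscore \<pi>2 p > SC V c + vscore \<pi>1 c + vscore \<pi>2 c)"

definition C_L :: "'a set \<Rightarrow> 'a \<Rightarrow> ('a \<Rightarrow> nat) \<Rightarrow> 'a set" where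
  "C_L C p L = {c\<in>C. L c < L p}"

definition C_R :: "'a set \<Rightarrow> 'a \<Rightarrow> ('a \<Rightarrow> nat) \<Rightarrow> 'a set" where
  "C_R C p L = {c\<in>C. L c > L p}"

definition C_opp :: "'a set \<Rightarrow> 'a \<Rightarrow> ('a \<Rightarrow> nat) \<Rightarrow> 'a \<Rightarrow> 'a set" where
  "C_opp C p L c = (if c \<in> C_R C p L then C_L C p L else C_R C p L)"

definition C_pos :: "'a set \<Rightarrow> 'a \<Rightarrow> ('a \<Rightarrow> nat) \<Rightarrow> nat \<Rightarrow> nat \<Rightarrow> 'a set" where
  "C_pos C p \<pi> x x' = {d \<in> insert p C. x \<le> \<pi> d \<and> \<pi> d \<le> x'}"

text \<open>Moving c from position x = pi c up to position x', shifting the ones in between down by one.\<close>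
definition shift_vote :: "('a \<Rightarrow> nat) \<Rightarrow> 'a \<Rightarrow> nat \<Rightarrow> nat \<Rightarrow> 'a \<Rightarrow> nat" where
  "shift_vote \<pi> c x x' = (\<lambda>d. if d = c then x'
                              else if x < \<pi> d \<and> \<pi> d \<le> x' then \<pi> d - 1 else \<pi> d)"

end

theory Submission
  imports Defs
begin

lemma coinc_from:
  assumes R: "\<forall>a\<in>D. \<forall>b\<in>D. a\<noteq>b \<longrightarrow> ((L a < L b \<and> L b \<le> L p) \<or> (L p \<le> L b \<and> L b < L a)) \<longrightarrow> \<pi> a < \<pi> b"
  shows "coincident D \<pi> L"
  unfolding coincident_def
proof (intro ballI impI)
  fix a b e assume D: "a\<in>D" "b\<in>D" "e\<in>D" and ne: "a \<noteq> b \<and> b \<noteq> e \<and> a \<noteq> e"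
    and o: "L a < L b \<and> L b < L e \<or> L e < L b \<and> L b < L a" and g: "\<pi> e > \<pi> b"
  have ab: "\<pi> a < \<pi> b" if h: "((L a < L b \<and> L b \<le> L p) \<or> (L p \<le> L b \<and> L b < L a))"
    using R[rule_format, OF D(1) D(2) _ h] ne by simp
  have eb: "\<pi> e < \<pi> b" if h: "((L e < L b \<and> L b \<le> L p) \<or> (L p \<le> L b \<and> L b < L e))"
    using R[rule_format, OF D(3) D(2) _ h] ne by auto
  show "\<pi> b > \<pi> a"
  proof (cases "L b \<le> L p")
    case True
    show ?thesis
    proof (cases "L a < L b")
      case True thus ?thesis using ab `L b \<le> L p` by simp
    next
      case False
      hence "L e < L b" using o by auto
      hence "\<pi> e < \<pi> b" using eb `L b \<le> L p` by simp
      thus ?thesis using g by simp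
    qed
  next
    case False
    show ?thesis
    proof (cases "L a < L b")
      case True
      hence "L b < L e" using o by auto
      hence "\<pi> e < \<pi> b" using eb False by simp
      thus ?thesis using g by simp
    next
      case False
      hence "L b < L a" using o by auto
      thus ?thesis using ab `\<not> L b \<le> L p` by simp
    qed
  qed
qed

lemma coinc_to:
  assumes co: "coincident D \<pi> L" and ip: "inj_on \<pi> D" and iL: "inj_on L D" and pD: "p \<in> D"
    and top: "\<forall>d\<in>D. \<pi> d \<le> \<pi> p"
  shows "\<forall>a\<in>D. \<forall>b\<in>D. a\<noteq>b \<longrightarrow> ((L a < L b \<and> L b \<le> L p) \<or> (L p \<le> L b \<and> L b < L a)) \<longrightarrow> \<pi> a < \<pi> b"
proof (intro ballI impI)
  fix a b assume D: "a\<in>D" "b\<in>D" and ne: "a\<noteq>b" and o: "(L a < L b \<and> L b \<le> L p) \<or> (L p \<le> L b \<and> L b < L a)"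
  have ap: "a \<noteq> p" using o by auto
  have "\<pi> a \<noteq> \<pi> p" using ip D(1) pD ap unfolding inj_on_def by blast
  hence pa: "\<pi> a < \<pi> p" using top D(1) by (simp add: order_le_neq_trans)
  show "\<pi> a < \<pi> b"
  proof (cases "b = p")
    case True thus ?thesis using pa by simp
  next
    case False
    have "\<pi> b \<noteq> \<pi> p" using ip D(2) pD False unfolding inj_on_def by blast
    hence pb: "\<pi> b < \<pi> p" using top D(2) by (simp add: order_le_neq_trans)
    have "L b \<noteq> L p" using iL D(2) pD False unfolding inj_on_def by blast
    hence o2: "L a < L b \<and> L b < L p \<or> L p < L b \<and> L b < L a" using o by auto
    have dist: "a \<noteq> b \<and> b \<noteq> p \<and> a \<noteq> p" using ne False ap by simp
    have co': "\<forall>a\<in>D. \<forall>b\<in>D. \<forall>c\<in>D. a \<noteq> b \<and> b \<noteq> c \<and> a \<noteq> c \<longrightarrow>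
        (L a < L b \<and> L b < L c \<or> L c < L b \<and> L b < L a) \<longrightarrow> \<pi> c > \<pi> b \<longrightarrow> \<pi> b > \<pi> a"
      using co unfolding coincident_def .
    show ?thesis using co'[rule_format, OF D(1) D(2) pD dist o2 pb] .
  qed
qed

lemma shift_ok:
  assumes fin: "finite C" and pC: "p \<notin> C" and injL: "inj_on L (insert p C)"
    and v: "is_vote C p \<pi>" and co: "coincident (insert p C) \<pi> L"
    and top: "\<pi> p = card C + 1" and cC: "c \<in> C" and hx: "\<pi> c = x" and lt: "x < x'"
    and sub: "C_pos C p \<pi> (x+1) x' \<subseteq> C_opp C p L c"
  shows "is_vote C p (shift_vote \<pi> c x x') \<and> coincident (insert p C) (shift_vote \<pi> c x x') L
     \<and> shift_vote \<pi> c x x' p = card C + 1 \<and> (\<forall>d\<in>C. d \<noteq> c \<longrightarrow> shift_vote \<pi> c x x' d \<le> \<pi> d)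
     \<and> shift_vote \<pi> c x x' c = x'"
proof -
  define n where "n = card C"
  define D where "D = insert p C"
  define s where "s = shift_vote \<pi> c x x'"
  have bij: "bij_betw \<pi> D {1..n+1}" using v unfolding is_vote_def D_def n_def by simp
  have ip: "inj_on \<pi> D" and img: "\<pi> ` D = {1..n+1}" using bij by (auto simp: bij_betw_def)
  have rng: "\<forall>d\<in>D. 1 \<le> \<pi> d \<and> \<pi> d \<le> n+1" using img by auto
  have cp: "c \<noteq> p" using cC pC by auto
  have pD: "p \<in> D" and cD: "c \<in> D" using cC by (auto simp: D_def)
  have neq: "\<forall>a\<in>D. \<forall>b\<in>D. a \<noteq> b \<longrightarrow> \<pi> a \<noteq> \<pi> b" using ip by (meson inj_on_eq_iff)
  have xn: "x < n+1" using neq cD pD cp rng hx top n_def by (metis le_neq_implies_less)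
  have oppC: "C_opp C p L c \<subseteq> C" unfolding C_opp_def C_L_def C_R_def by auto
  have x'n: "x' \<le> n"
  proof (rule ccontr)
    assume "\<not> x' \<le> n"
    hence "p \<in> C_pos C p \<pi> (x+1) x'" using xn top n_def by (simp add: C_pos_def)
    thus False using sub oppC pC by auto
  qed
  have sdef: "\<And>d. s d = (if d = c then x' else if x < \<pi> d \<and> \<pi> d \<le> x' then \<pi> d - 1 else \<pi> d)"
    by (simp add: s_def shift_vote_def)
  have sp: "s p = n+1" using sdef cp top n_def x'n by auto
  have sc: "s c = x'" using sdef by simp
  have sle: "\<forall>d\<in>C. d \<noteq> c \<longrightarrow> s d \<le> \<pi> d" using sdef by auto
  have srng: "\<forall>d\<in>D. 1 \<le> s d \<and> s d \<le> n+1"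
  proof
    fix d assume d: "d \<in> D"
    have x1: "1 \<le> x" using rng cD hx by auto
    show "1 \<le> s d \<and> s d \<le> n+1" using rng d sdef[of d] x'n lt x1 by auto
  qed
  have nx: "\<forall>d\<in>D. d \<noteq> c \<longrightarrow> \<pi> d \<noteq> x" using neq cD hx by auto
  have smon: "\<And>a b. a \<in> D \<Longrightarrow> b \<in> D \<Longrightarrow> a \<noteq> c \<Longrightarrow> b \<noteq> c \<Longrightarrow> \<pi> a < \<pi> b \<Longrightarrow> s a < s b"
  proof -
    fix a b assume a: "a \<in> D" and b: "b \<in> D" and ac: "a \<noteq> c" and bc: "b \<noteq> c" and l: "\<pi> a < \<pi> b"
    have na: "\<pi> a \<noteq> x" and nb: "\<pi> b \<noteq> x" using nx a b ac bc by auto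
    have sa: "s a = (if x < \<pi> a \<and> \<pi> a \<le> x' then \<pi> a - 1 else \<pi> a)" using sdef[of a] ac by simp
    have sb: "s b = (if x < \<pi> b \<and> \<pi> b \<le> x' then \<pi> b - 1 else \<pi> b)" using sdef[of b] bc by simp
    show "s a < s b" using sa sb l na nb by (auto split: if_splits)
  qed
  have snx: "\<And>d. d \<in> D \<Longrightarrow> d \<noteq> c \<Longrightarrow> s d \<noteq> x'"
  proof -
    fix d assume d: "d \<in> D" and dc: "d \<noteq> c"
    have nd: "\<pi> d \<noteq> x" using nx d dc by auto
    have sd: "s d = (if x < \<pi> d \<and> \<pi> d \<le> x' then \<pi> d - 1 else \<pi> d)" using sdef[of d] dc by simp
    show "s d \<noteq> x'" using sd nd lt by (auto split: if_splits)
  qed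
  have sinj: "inj_on s D"
  proof (rule inj_onI)
    fix a b assume a: "a \<in> D" and b: "b \<in> D" and e: "s a = s b"
    show "a = b"
    proof (rule ccontr)
      assume ab: "a \<noteq> b"
      have "\<pi> a \<noteq> \<pi> b" using neq a b ab by auto
      hence "\<pi> a < \<pi> b \<or> \<pi> b < \<pi> a" by auto
      moreover have "a = c \<Longrightarrow> False" using snx[OF b] ab e sc by auto
      moreover have "b = c \<Longrightarrow> False" using snx[OF a] ab e sc by auto
      ultimately show False using smon[OF a b] smon[OF b a] e by fastforce
    qed
  qed
  have "s ` D \<subseteq> {1..n+1}" using srng by auto
  moreover have "card (s ` D) = card {1..n+1}"
    using card_image[OF sinj] fin pC by (simp add: D_def n_def)
  ultimately have "s ` D = {1..n+1}" by (simp add: card_subset_eq)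
  hence sbij: "bij_betw s D {1..n+1}" using sinj by (simp add: bij_betw_def)
  have mono: "\<forall>a\<in>D. \<forall>b\<in>D. a\<noteq>b \<longrightarrow> ((L a < L b \<and> L b \<le> L p) \<or> (L p \<le> L b \<and> L b < L a)) \<longrightarrow> \<pi> a < \<pi> b"
    by (rule coinc_to[OF co[folded D_def] ip injL[folded D_def] pD]) (use rng top n_def in auto)
  have smono: "\<forall>a\<in>D. \<forall>b\<in>D. a\<noteq>b \<longrightarrow> ((L a < L b \<and> L b \<le> L p) \<or> (L p \<le> L b \<and> L b < L a)) \<longrightarrow> s a < s b"
  proof (intro ballI impI)
    fix a b assume a: "a \<in> D" and b: "b \<in> D" and ab: "a \<noteq> b"
      and o: "(L a < L b \<and> L b \<le> L p) \<or> (L p \<le> L b \<and> L b < L a)"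
    have lt0: "\<pi> a < \<pi> b" using mono a b ab o by blast
    show "s a < s b"
    proof (cases "a = c")
      case True
      show ?thesis
      proof (cases "b = p")
        case True thus ?thesis using sp sc x'n \<open>a = c\<close> by simp
      next
        case False
        hence bC: "b \<in> C" using b D_def by auto
        have "b \<notin> C_opp C p L c"
          using o \<open>a = c\<close> bC cC unfolding C_opp_def C_L_def C_R_def by auto
        hence "b \<notin> C_pos C p \<pi> (x+1) x'" using sub by auto
        hence "\<pi> b > x'" using lt0 \<open>a = c\<close> hx bC unfolding C_pos_def by auto
        thus ?thesis using sdef[of b] \<open>a = c\<close> ab sc by auto
      qed
    next
      case False
      note ac = False
      show ?thesis
      proof (cases "b = c")
        case True
        thus ?thesis using lt0 hx sdef[of a] ac sc lt by (auto split: if_split_asm)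
      next
        case False
        show ?thesis using smon[OF a b ac False lt0] .
      qed
    qed
  qed
  have "coincident D s L" by (rule coinc_from[OF smono])
  hence co': "coincident (insert p C) s L" by (simp only: D_def)
  have iv: "is_vote C p s" using sbij unfolding is_vote_def D_def n_def .
  have "is_vote C p s \<and> coincident (insert p C) s L \<and> s p = card C + 1 \<and> (\<forall>d\<in>C. d \<noteq> c \<longrightarrow> s d \<le> \<pi> d) \<and> s c = x'"
    using iv co' sp sle sc n_def by blast
  thus ?thesis unfolding s_def .
qed

theorem mainTheorem7:
  fixes C :: "'a set" and p :: 'a and L :: "'a \<Rightarrow> nat" and V :: "('a \<Rightarrow> nat) list"
    and \<pi>1 \<pi>2 :: "'a \<Rightarrow> nat" and c :: 'a and x y x' y' :: nat
  assumes inst: "ubm2sp_instance C p L V"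
    and sol: "ubm2sp_solution C p L V \<pi>1 \<pi>2"
    and top1: "\<pi>1 p = card C + 1" and top2: "\<pi>2 p = card C + 1"
    and cC: "c \<in> C" and hx: "\<pi>1 c = x" and hy: "\<pi>2 c = y"
    and c1: "x' > x" "y' > y"
    and c2: "SC V c + int x' + int y' - 2 < SC V p + 2 * int (card C)"
    and c3: "C_pos C p \<pi>1 (x + 1) x' \<subseteq> C_opp C p L c"
            "C_pos C p \<pi>2 (y + 1) y' \<subseteq> C_opp C p L c"
  shows "ubm2sp_solution C p L V (shift_vote \<pi>1 c x x') (shift_vote \<pi>2 c y y')"
proof -
  have fin: "finite C" and pC: "p \<notin> C" and Lv: "is_vote C p L"
    using inst by (auto simp: ubm2sp_instance_def)
  have injL: "inj_on L (insert p C)" using Lv by (simp add: is_vote_def bij_betw_def)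
  have v1: "is_vote C p \<pi>1" and v2: "is_vote C p \<pi>2"
    and co1: "coincident (insert p C) \<pi>1 L" and co2: "coincident (insert p C) \<pi>2 L"
    and sc: "\<forall>d\<in>C. SC V p + vscore \<pi>1 p + vscore \<pi>2 p > SC V d + vscore \<pi>1 d + vscore \<pi>2 d"
    using sol by (auto simp: ubm2sp_solution_def)
  note A = shift_ok[OF fin pC injL v1 co1 top1 cC hx c1(1) c3(1)]
  note B = shift_ok[OF fin pC injL v2 co2 top2 cC hy c1(2) c3(2)]
  have "\<forall>d\<in>C. SC V p + vscore (shift_vote \<pi>1 c x x') p + vscore (shift_vote \<pi>2 c y y') p
     > SC V d + vscore (shift_vote \<pi>1 c x x') d + vscore (shift_vote \<pi>2 c y y') d"
  proof
    fix d assume d: "d \<in> C"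
    show "SC V p + vscore (shift_vote \<pi>1 c x x') p + vscore (shift_vote \<pi>2 c y y') p
     > SC V d + vscore (shift_vote \<pi>1 c x x') d + vscore (shift_vote \<pi>2 c y y') d"
    proof (cases "d = c")
      case True
      have e1: "shift_vote \<pi>1 c x x' c = x'" "shift_vote \<pi>2 c y y' c = y'"
        "shift_vote \<pi>1 c x x' p = card C + 1" "shift_vote \<pi>2 c y y' p = card C + 1"
        using A B by blast+
      show ?thesis using e1 c2 True unfolding vscore_def by simp
    next
      case False
      have "shift_vote \<pi>1 c x x' d \<le> \<pi>1 d" "shift_vote \<pi>2 c y y' d \<le> \<pi>2 d"
        using A B d False by blast+
      moreover have "shift_vote \<pi>1 c x x' p = \<pi>1 p" "shift_vote \<pi>2 c y y' p = \<pi>2 p"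
        using A B top1 top2 by simp_all
      moreover have "SC V p + vscore \<pi>1 p + vscore \<pi>2 p > SC V d + vscore \<pi>1 d + vscore \<pi>2 d"
        using sc d by blast
      ultimately show ?thesis unfolding vscore_def by linarith
    qed
  qed
  thus ?thesis using A B unfolding ubm2sp_solution_def by blast
qed

end
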